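(* Let $S$ be a compact, metrizable, separable space and let $A$ be the generator of a Feller semigroup on $C(S)$ with resolvent $R_\lambda=(\lambda-A)^{-1}$, $\lambda>0$. Suppose $A$ is not conservative, i.e. $\lambda R_\lambda 1_S\neq 1_S$ for some $\lambda>0$. Then there exists at least one Laplace transform of an exit law for $A$.
   Context: A Feller semigroup is a strongly continuous semigroup of positive contractions on $C(S)$ (real continuous functions, sup norm) with $T(0)=I$, not necessarily conservative; it is conservative iff $\lambda R_\lambda1_S=1_S$ for all $\lambda>0$. A family $\ell_\lambda$, $\lambda>0$, is the Laplace transform of an exit law for $A$ if: (a) $(0,\infty)\ni\lambda\mapsto\ell_\lambda\in C(S)$ is locally bounded, non-negative and $\ell_\lambda\neq0$ for at least one $\lambda$; (b) $\lim_{\lambda\to0+}\ell_\lambda(x)\le1$ for each $x\in S$; (c) $(\lambda-\mu)R_\lambda\ell_\mu=\ell_\mu-\ell_\lambda$ for all $\lambda,\mu>0$. *)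

theory Defs
  imports "HOL-Analysis.Analysis"
begin

(* C(S) for compact S is represented by the bounded continuous functions
  type  'a \<Rightarrow>_C real  (sup norm); S is the whole type 'a. *)

type_synonym 'a CS = "'a \<Rightarrow>\<^sub>C real"

definition nonneg_fun :: "'a::topological_space CS \<Rightarrow> bool" where
  "nonneg_fun f \<longleftrightarrow> (\<forall>x. 0 \<le> apply_bcontfun f x)"

definition feller_semigroup :: "(real \<Rightarrow> 'a::topological_space CS \<Rightarrow> 'a CS) \<Rightarrow> bool" where
  "feller_semigroup T \<longleftrightarrow>
     (\<forall>t\<ge>0. linear (T t)) \<and>
     (\<forall>t\<ge>0. \<forall>f. nonneg_fun f \<longrightarrow> nonneg_fun (T t f)) \<and>
     (\<forall>t\<ge>0. \<forall>f. norm (T t f) \<le> norm f) \<and>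
     T 0 = id \<and>
     (\<forall>s\<ge>0. \<forall>t\<ge>0. T (s + t) = T s \<circ> T t) \<and>
     (\<forall>f. ((\<lambda>t. T t f) \<longlongrightarrow> f) (at_right 0))"

(* Graph of the generator A: f \<in> D(A) and A f = g. *)
definition generator :: "(real \<Rightarrow> 'a::topological_space CS \<Rightarrow> 'a CS) \<Rightarrow> 'a CS \<Rightarrow> 'a CS \<Rightarrow> bool" where
  "generator T f g \<longleftrightarrow> ((\<lambda>t. (T t f - f) /\<^sub>R t) \<longlongrightarrow> g) (at_right 0)"

definition resolvent :: "(real \<Rightarrow> 'a::topological_space CS \<Rightarrow> 'a CS) \<Rightarrow> real \<Rightarrow> 'a CS \<Rightarrow> 'a CS" where
  "resolvent T lam g = (THE f. \<exists>h. generator T f h \<and> lam *\<^sub>R f - h = g)"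

definition one_S :: "'a::topological_space CS" where
  "one_S = const_bcontfun 1"

definition exit_law_LT :: "(real \<Rightarrow> 'a::topological_space CS \<Rightarrow> 'a CS) \<Rightarrow> (real \<Rightarrow> 'a CS) \<Rightarrow> bool" where
  "exit_law_LT R l \<longleftrightarrow>
     (\<forall>a b. 0 < a \<longrightarrow> a \<le> b \<longrightarrow> bounded (l ` {a..b})) \<and>
     (\<forall>lam>0. nonneg_fun (l lam)) \<and>
     (\<exists>lam>0. l lam \<noteq> 0) \<and>
     (\<forall>x. \<exists>L. ((\<lambda>lam. apply_bcontfun (l lam) x) \<longlongrightarrow> L) (at_right 0) \<and> L \<le> 1) \<and>
     (\<forall>lam>0. \<forall>mu>0. (lam - mu) *\<^sub>R R lam (l mu) = l mu - l lam)"

end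

theory Submission
  imports Defs
begin

instance bcontfun :: (metric_space, banach) banach ..

lemma feller_props:
  assumes "feller_semigroup T"
  shows "\<And>t. t \<ge> 0 \<Longrightarrow> linear (T t)"
    and "\<And>t f. t \<ge> 0 \<Longrightarrow> nonneg_fun f \<Longrightarrow> nonneg_fun (T t f)"
    and "\<And>t f. t \<ge> 0 \<Longrightarrow> norm (T t f) \<le> norm f"
    and "T 0 = id"
    and "\<And>s t. s \<ge> 0 \<Longrightarrow> t \<ge> 0 \<Longrightarrow> T (s + t) = T s \<circ> T t"
    and "\<And>f. ((\<lambda>t. T t f) \<longlongrightarrow> f) (at_right 0)"
  using assms unfolding feller_semigroup_def by auto

lemma feller_bl:
  assumes "feller_semigroup T" "t \<ge> 0"
  shows "bounded_linear (T t)"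
proof -
  have l: "linear (T t)" using feller_props(1)[OF assms(1,2)] .
  show ?thesis
    by (rule bounded_linear_intro[where K=1]) (auto simp: linear_add[OF l] linear_scale[OF l] feller_props(3)[OF assms])
qed

lemma dissip:
  fixes T :: "real \<Rightarrow> ('a::metric_space \<Rightarrow>\<^sub>C real) \<Rightarrow> ('a \<Rightarrow>\<^sub>C real)"
  assumes F: "feller_semigroup T" and lam: "lam > 0" and G: "generator T f h"
  shows "lam * norm f \<le> norm (lam *\<^sub>R f - h)"
proof (rule ccontr)
  let ?g = "lam *\<^sub>R f - h"
  assume "\<not> ?thesis"
  hence lt: "norm ?g < lam * norm f" by simp
  define e where "e = (lam * norm f - norm ?g) / 2"
  have e: "e > 0" using lt by (simp add: e_def)
  have "\<forall>\<^sub>F t in at_right 0. dist ((T t f - f) /\<^sub>R t) h < e"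
    using G e unfolding generator_def tendsto_iff by blast
  then obtain b where b: "b > 0" and hb: "\<And>t. t > 0 \<Longrightarrow> t < b \<Longrightarrow> dist ((T t f - f) /\<^sub>R t) h < e"
    unfolding eventually_at_right_field by auto
  define t where "t = b / 2"
  have t: "t > 0" "t < b" using b by (auto simp: t_def)
  define q where "q = (T t f - f) /\<^sub>R t - h"
  have q: "norm q < e" using hb[OF t] by (simp add: q_def dist_norm)
  have Tf: "T t f = (1 + t * lam) *\<^sub>R f - t *\<^sub>R ?g + t *\<^sub>R q"
    using t by (simp add: q_def algebra_simps)
  have "norm ((1 + t * lam) *\<^sub>R f) \<le> norm (T t f) + norm (t *\<^sub>R ?g) + norm (t *\<^sub>R q)"
  proof -
    have eq: "(1 + t * lam) *\<^sub>R f = T t f + t *\<^sub>R ?g - t *\<^sub>R q" using Tf by (simp add: algebra_simps)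
    moreover have "norm (T t f + t *\<^sub>R ?g - t *\<^sub>R q) \<le> norm (T t f + t *\<^sub>R ?g) + norm (t *\<^sub>R q)"
      by (rule norm_triangle_ineq4)
    moreover have "norm (T t f + t *\<^sub>R ?g) \<le> norm (T t f) + norm (t *\<^sub>R ?g)"
      by (rule norm_triangle_ineq)
    ultimately show ?thesis unfolding eq by linarith
  qed
  hence "(1 + t * lam) * norm f \<le> norm f + t * norm ?g + t * norm q"
    using feller_props(3)[OF F, of t f] t lam by simp
  moreover have "t * norm q \<le> t * e" using q t by simp
  ultimately have "t * (lam * norm f - norm ?g - e) \<le> 0" by (simp add: algebra_simps)
  moreover have "lam * norm f - norm ?g - e = e" unfolding e_def by (simp add: field_simps)
  ultimately show False using t e by (simp add: mult_le_0_iff)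
qed

lemma gen_lin:
  fixes T :: "real \<Rightarrow> ('a::metric_space \<Rightarrow>\<^sub>C real) \<Rightarrow> ('a \<Rightarrow>\<^sub>C real)"
  assumes F: "feller_semigroup T" and G1: "generator T f1 h1" and G2: "generator T f2 h2"
  shows "generator T (a *\<^sub>R f1 + b *\<^sub>R f2) (a *\<^sub>R h1 + b *\<^sub>R h2)"
proof -
  have lim: "((\<lambda>t. a *\<^sub>R ((T t f1 - f1) /\<^sub>R t) + b *\<^sub>R ((T t f2 - f2) /\<^sub>R t)) \<longlongrightarrow> a *\<^sub>R h1 + b *\<^sub>R h2) (at_right 0)"
    using G1 G2 unfolding generator_def by (intro tendsto_intros)
  have "\<forall>\<^sub>F t in at_right (0::real). t > 0" by (simp add: eventually_at_right_less)
  hence ev: "\<forall>\<^sub>F t in at_right 0. a *\<^sub>R ((T t f1 - f1) /\<^sub>R t) + b *\<^sub>R ((T t f2 - f2) /\<^sub>R t) = (T t (a *\<^sub>R f1 + b *\<^sub>R f2) - (a *\<^sub>R f1 + b *\<^sub>R f2)) /\<^sub>R t"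
  proof (rule eventually_mono)
    fix t :: real assume t: "t > 0"
    have l: "linear (T t)" using feller_props(1)[OF F] t by simp
    show "a *\<^sub>R ((T t f1 - f1) /\<^sub>R t) + b *\<^sub>R ((T t f2 - f2) /\<^sub>R t) = (T t (a *\<^sub>R f1 + b *\<^sub>R f2) - (a *\<^sub>R f1 + b *\<^sub>R f2)) /\<^sub>R t"
      by (simp add: linear_add[OF l] linear_scale[OF l] algebra_simps)
  qed
  show ?thesis unfolding generator_def using Lim_transform_eventually[OF lim ev] .
qed

lemma res_unique:
  fixes T :: "real \<Rightarrow> ('a::metric_space \<Rightarrow>\<^sub>C real) \<Rightarrow> ('a \<Rightarrow>\<^sub>C real)"
  assumes F: "feller_semigroup T" and lam: "lam > 0"
    and G1: "generator T f1 h1" "lam *\<^sub>R f1 - h1 = g"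
    and G2: "generator T f2 h2" "lam *\<^sub>R f2 - h2 = g"
  shows "f1 = f2"
proof -
  have "generator T (1 *\<^sub>R f1 + (-1) *\<^sub>R f2) (1 *\<^sub>R h1 + (-1) *\<^sub>R h2)"
    by (rule gen_lin[OF F G1(1) G2(1)])
  hence G: "generator T (f1 - f2) (h1 - h2)" by simp
  have "lam * norm (f1 - f2) \<le> norm (lam *\<^sub>R (f1 - f2) - (h1 - h2))" by (rule dissip[OF F lam G])
  also have "lam *\<^sub>R (f1 - f2) - (h1 - h2) = (lam *\<^sub>R f1 - h1) - (lam *\<^sub>R f2 - h2)"
    by (simp add: algebra_simps)
  also have "\<dots> = 0" using G1(2) G2(2) by simp
  finally have "lam * norm (f1 - f2) \<le> 0" by simp
  hence "norm (f1 - f2) \<le> 0" using lam by (simp add: mult_le_0_iff)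
  thus ?thesis by simp
qed

lemma res_eq:
  fixes T :: "real \<Rightarrow> ('a::metric_space \<Rightarrow>\<^sub>C real) \<Rightarrow> ('a \<Rightarrow>\<^sub>C real)"
  assumes F: "feller_semigroup T" and lam: "lam > 0"
    and G: "generator T f h" "lam *\<^sub>R f - h = g"
  shows "resolvent T lam g = f"
  unfolding resolvent_def
proof (rule the_equality)
  show "\<exists>h. generator T f h \<and> lam *\<^sub>R f - h = g" using G by blast
next
  fix f' assume "\<exists>h. generator T f' h \<and> lam *\<^sub>R f' - h = g"
  then obtain h' where "generator T f' h'" "lam *\<^sub>R f' - h' = g" by blast
  thus "f' = f" using res_unique[OF F lam _ _ G] by blast
qed

lemma T_cont:
  fixes T :: "real \<Rightarrow> ('a::metric_space \<Rightarrow>\<^sub>C real) \<Rightarrow> ('a \<Rightarrow>\<^sub>C real)"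
  assumes F: "feller_semigroup T"
  shows "continuous_on {0..} (\<lambda>t. T t g)"
  unfolding continuous_on_iff
proof (intro ballI allI impI)
  fix t e assume t: "t \<in> {0::real..}" and e: "(e::real) > 0"
  have "\<forall>\<^sub>F s in at_right 0. dist (T s g) g < e" using feller_props(6)[OF F, of g] e unfolding tendsto_iff by blast
  then obtain b where b: "b > 0" and hb: "\<And>s. s > 0 \<Longrightarrow> s < b \<Longrightarrow> dist (T s g) g < e"
    unfolding eventually_at_right_field by auto
  show "\<exists>d>0. \<forall>x'\<in>{0..}. dist x' t < d \<longrightarrow> dist (T x' g) (T t g) < e"
  proof (intro exI[of _ b] conjI ballI impI)
    show "b > 0" by (rule b)
    fix s assume s: "s \<in> {0::real..}" "dist s t < b"
    consider "s = t" | "s > t" | "s < t" by linarith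
    thus "dist (T s g) (T t g) < e"
    proof cases
      case 1 then show ?thesis using e by simp
    next
      case 2
      have "T (t + (s - t)) = T t \<circ> T (s - t)" using feller_props(5)[OF F, of t "s - t"] t 2 by simp
      hence "T s g = T t (T (s - t) g)" by simp
      hence "dist (T s g) (T t g) = norm (T t (T (s - t) g - g))"
        using linear_diff[OF feller_props(1)[OF F]] t by (simp add: dist_norm)
      also have "\<dots> \<le> norm (T (s - t) g - g)" using feller_props(3)[OF F] t by simp
      also have "\<dots> < e" using hb[of "s - t"] 2 s by (simp add: dist_norm dist_real_def)
      finally show ?thesis .
    next
      case 3
      have "T (s + (t - s)) = T s \<circ> T (t - s)" using feller_props(5)[OF F, of s "t - s"] s 3 by simp
      hence "T t g = T s (T (t - s) g)" by simp
      hence "dist (T s g) (T t g) = norm (T s (g - T (t - s) g))"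
        using linear_diff[OF feller_props(1)[OF F]] s by (simp add: dist_norm)
      also have "\<dots> \<le> norm (g - T (t - s) g)" using feller_props(3)[OF F] s by simp
      also have "\<dots> < e" using hb[of "t - s"] 3 s by (simp add: dist_norm dist_real_def norm_minus_commute)
      finally show ?thesis .
    qed
  qed
qed

lemma eval_bl: "bounded_linear (\<lambda>f::'a::topological_space \<Rightarrow>\<^sub>C real. apply_bcontfun f x)"
  by (rule bounded_linear_intro[where K=1]) (auto, metis norm_bounded real_norm_def)


lemma exist:
  fixes T :: "real \<Rightarrow> ('a::metric_space \<Rightarrow>\<^sub>C real) \<Rightarrow> ('a \<Rightarrow>\<^sub>C real)"
  assumes F: "feller_semigroup T" and lam: "lam > 0"
  shows "\<exists>f. generator T f (lam *\<^sub>R f - g) \<and> (nonneg_fun g \<longrightarrow> nonneg_fun f)"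
proof -
  define \<phi> where "\<phi> = (\<lambda>t. exp (- lam * t) *\<^sub>R T t g)"
  have c\<phi>: "continuous_on {0..} \<phi>" unfolding \<phi>_def
    by (intro continuous_intros T_cont[OF F])
  have c\<phi>ab: "continuous_on {a..b} \<phi>" if "0 \<le> a" for a b
    by (rule continuous_on_subset[OF c\<phi>]) (use that in auto)
  have int\<phi>: "\<phi> integrable_on {a..b}" if "0 \<le> a" for a b
    by (rule integrable_continuous_interval, rule c\<phi>ab[OF that])
  define q where "q = exp (- lam)"
  have q: "0 \<le> q" "q < 1" using lam by (auto simp: q_def)
  have n\<phi>: "norm (\<phi> t) \<le> q ^ n * norm g" if "real n \<le> t" for t n
  proof -
    have "norm (\<phi> t) = exp (- lam * t) * norm (T t g)" unfolding \<phi>_def by simp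
    also have "\<dots> \<le> exp (- lam * t) * norm g"
      using feller_props(3)[OF F, of t g] that by (intro mult_left_mono) auto
    also have "exp (- lam * t) \<le> q ^ n"
    proof -
      have "q ^ n = exp (real n * (- lam))" unfolding q_def by (rule exp_of_nat_mult[symmetric])
      moreover have "- lam * t \<le> real n * (- lam)" using that lam by (simp add: mult_left_mono)
      ultimately show ?thesis by simp
    qed
    hence "exp (- lam * t) * norm g \<le> q ^ n * norm g" by (intro mult_right_mono) auto
    finally show ?thesis .
  qed
  have bnd: "norm (integral {a..b} \<phi>) \<le> q ^ n * norm g * (b - a)" if "real n \<le> a" "a \<le> b" for a b n
    using integral_bound[OF that(2) c\<phi>ab, of "q ^ n * norm g"] that n\<phi> by auto
  define I where "I = (\<lambda>x. integral {0..x} \<phi>)"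
  define J where "J = (\<lambda>k::nat. integral {real k..real k + 1} \<phi>)"
  have IJ: "(\<Sum>k<n. J k) = I (real n)" for n
  proof (induction n)
    case 0 then show ?case by (simp add: I_def)
  next
    case (Suc n)
    have "I (real n) + J n = I (real (Suc n))"
      unfolding I_def J_def using Henstock_Kurzweil_Integration.integral_combine[where f=\<phi> and a=0 and c="real n" and b="real n + 1"] int\<phi>[of 0 "real n + 1"]
      by (simp add: add.commute)
    thus ?case using Suc by simp
  qed
  have sJ: "summable J"
  proof (rule summable_comparison_test')
    show "summable (\<lambda>n. norm g * q ^ n)" using q by (intro summable_mult summable_geometric) auto
    fix n show "norm (J n) \<le> norm g * q ^ n" using bnd[of n "real n" "real n + 1"] unfolding J_def by (simp add: mult.commute)
  qed
  define Fr where "Fr = suminf J"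
  have IF: "(\<lambda>n. I (real n)) \<longlonglongrightarrow> Fr"
    using summable_LIMSEQ[OF sJ] unfolding Fr_def IJ .
  have IFs: "(\<lambda>n. I (real n + s)) \<longlonglongrightarrow> Fr" if s: "0 \<le> s" for s
  proof -
    have "(\<lambda>n. I (real n + s) - I (real n)) \<longlonglongrightarrow> 0"
    proof (rule Lim_null_comparison)
      show "\<forall>\<^sub>F n in sequentially. norm (I (real n + s) - I (real n)) \<le> q ^ n * norm g * s"
      proof (rule always_eventually, rule allI)
        fix n
        have "I (real n + s) - I (real n) = integral {real n..real n + s} \<phi>"
          unfolding I_def using Henstock_Kurzweil_Integration.integral_combine[where f=\<phi> and a=0 and c="real n" and b="real n + s"] int\<phi>[of 0 "real n + s"] s by simp (metis add_diff_cancel_left')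
        thus "norm (I (real n + s) - I (real n)) \<le> q ^ n * norm g * s" using bnd[of n "real n" "real n + s"] s by simp
      qed
      show "(\<lambda>n. q ^ n * norm g * s) \<longlonglongrightarrow> 0"
        using LIMSEQ_realpow_zero[OF q] by (intro tendsto_mult_left_zero)
    qed
    from tendsto_add[OF this IF] show ?thesis by simp
  qed
  have TsI: "T s (I x) = exp (lam * s) *\<^sub>R (I (x + s) - I s)" if s: "0 \<le> s" and x: "0 \<le> x" for s x
  proof -
    have "T s (I x) = integral {0..x} (T s \<circ> \<phi>)"
      unfolding I_def by (rule integral_linear[OF int\<phi> feller_bl[OF F s], symmetric]) simp
    also have "\<dots> = integral {0..x} (\<lambda>t. exp (lam * s) *\<^sub>R (\<phi> \<circ> ((+) s)) t)"
    proof (rule integral_cong)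
      fix t assume t: "t \<in> {0..x}"
      have l: "linear (T s)" using feller_props(1)[OF F s] .
      have "T s (T t g) = T (s + t) g" using feller_props(5)[OF F s, of t] t by simp
      moreover have "exp (- lam * t) = exp (lam * s) * exp (- lam * (s + t))"
        by (simp add: exp_add[symmetric] algebra_simps)
      ultimately show "(T s \<circ> \<phi>) t = exp (lam * s) *\<^sub>R (\<phi> \<circ> ((+) s)) t"
        unfolding \<phi>_def by (simp add: linear_scale[OF l])
    qed
    also have "\<dots> = exp (lam * s) *\<^sub>R integral {0 + s..x + s} \<phi>"
      by (simp only: integral_cmul integral_shift_Icc_real)
    also have "integral {0 + s..x + s} \<phi> = I (x + s) - I s"
      unfolding I_def using Henstock_Kurzweil_Integration.integral_combine[where f=\<phi> and a=0 and c=s and b="x + s"] int\<phi>[of 0 "x + s"] s x by simp (metis add_diff_cancel_left')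
    finally show ?thesis .
  qed
  have TsF: "T s Fr = exp (lam * s) *\<^sub>R (Fr - I s)" if s: "0 \<le> s" for s
  proof (rule LIMSEQ_unique)
    show "(\<lambda>n. T s (I (real n))) \<longlonglongrightarrow> T s Fr"
      by (rule bounded_linear.tendsto[OF feller_bl[OF F s] IF])
    have "(\<lambda>n. exp (lam * s) *\<^sub>R (I (real n + s) - I s)) \<longlonglongrightarrow> exp (lam * s) *\<^sub>R (Fr - I s)"
      by (intro tendsto_intros IFs s)
    thus "(\<lambda>n. T s (I (real n))) \<longlonglongrightarrow> exp (lam * s) *\<^sub>R (Fr - I s)"
      using TsI[OF s] by simp
  qed
  have \<phi>0: "\<phi> 0 = g" unfolding \<phi>_def using feller_props(4)[OF F] by simp
  have Is: "((\<lambda>s. I s /\<^sub>R s) \<longlongrightarrow> g) (at_right 0)"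
  proof -
    have "((\<lambda>u. integral {0..u} \<phi>) has_vector_derivative \<phi> 0) (at 0 within {0..1})"
      by (rule integral_has_vector_derivative[OF c\<phi>ab]) auto
    hence "((\<lambda>y. (1 / norm (y - 0)) *\<^sub>R (I y - (I 0 + (y - 0) *\<^sub>R g))) \<longlongrightarrow> 0) (at_right 0)"
      unfolding has_vector_derivative_def has_derivative_within \<phi>0 I_def
      by (simp add: at_within_Icc_at_right)
    hence "((\<lambda>y. I y /\<^sub>R y - g) \<longlongrightarrow> 0) (at_right 0)"
    proof (rule Lim_transform_eventually)
      show "\<forall>\<^sub>F y in at_right 0. (1 / norm (y - 0)) *\<^sub>R (I y - (I 0 + (y - 0) *\<^sub>R g)) = I y /\<^sub>R y - g"
        using eventually_at_right_less[of 0]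
      proof (rule eventually_mono)
        fix y :: real assume y: "0 < y"
        show "(1 / norm (y - 0)) *\<^sub>R (I y - (I 0 + (y - 0) *\<^sub>R g)) = I y /\<^sub>R y - g"
          using y by (simp add: I_def algebra_simps inverse_eq_divide)
      qed
    qed
    from tendsto_add[OF this tendsto_const[of g]] show ?thesis by simp
  qed
  have ex: "((\<lambda>s. (exp (lam * s) - 1) / s) \<longlongrightarrow> lam) (at_right 0)"
  proof -
    have "((\<lambda>s. exp (lam * s)) has_field_derivative lam) (at 0 within {0<..})"
      by (auto intro!: derivative_eq_intros)
    thus ?thesis unfolding has_field_derivative_iff by simp
  qed
  have ex1: "((\<lambda>s. exp (lam * s)) \<longlongrightarrow> 1) (at_right (0::real))"
    by (rule tendsto_eq_intros) (auto intro!: tendsto_eq_intros)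
  have G: "generator T Fr (lam *\<^sub>R Fr - g)"
    unfolding generator_def
  proof -
    have "((\<lambda>s. ((exp (lam * s) - 1) / s) *\<^sub>R Fr - exp (lam * s) *\<^sub>R (I s /\<^sub>R s)) \<longlongrightarrow> lam *\<^sub>R Fr - 1 *\<^sub>R g) (at_right 0)"
      by (intro tendsto_intros ex ex1 Is)
    hence lim2: "((\<lambda>s. ((exp (lam * s) - 1) / s) *\<^sub>R Fr - exp (lam * s) *\<^sub>R (I s /\<^sub>R s)) \<longlongrightarrow> lam *\<^sub>R Fr - g) (at_right 0)"
      by simp
    have ev: "\<forall>\<^sub>F s in at_right 0. ((exp (lam * s) - 1) / s) *\<^sub>R Fr - exp (lam * s) *\<^sub>R (I s /\<^sub>R s) = (T s Fr - Fr) /\<^sub>R s"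
      using eventually_at_right_less[of 0]
    proof (rule eventually_mono)
      fix s :: real assume s: "0 < s"
      show "((exp (lam * s) - 1) / s) *\<^sub>R Fr - exp (lam * s) *\<^sub>R (I s /\<^sub>R s) = (T s Fr - Fr) /\<^sub>R s"
      proof -
        have eqT: "T s Fr = exp (lam * s) *\<^sub>R Fr - exp (lam * s) *\<^sub>R I s" using TsF[of s] s by (simp add: scaleR_diff_right)
        show ?thesis unfolding eqT by (simp add: scaleR_diff_right scaleR_diff_left scaleR_scaleR diff_divide_distrib divide_inverse algebra_simps)
      qed
    qed
    show "((\<lambda>t. (T t Fr - Fr) /\<^sub>R t) \<longlongrightarrow> lam *\<^sub>R Fr - g) (at_right 0)"
      using Lim_transform_eventually[OF lim2 ev] .
  qed
  have NN: "nonneg_fun Fr" if g: "nonneg_fun g"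
    unfolding nonneg_fun_def
  proof
    fix x
    have lim: "(\<lambda>n. apply_bcontfun (I (real n)) x) \<longlonglongrightarrow> apply_bcontfun Fr x"
      by (rule bounded_linear.tendsto[OF eval_bl IF])
    have "0 \<le> apply_bcontfun (I (real n)) x" for n
    proof -
      have "apply_bcontfun (I (real n)) x = integral {0..real n} ((\<lambda>f. apply_bcontfun f x) \<circ> \<phi>)"
        unfolding I_def by (rule integral_linear[OF int\<phi> eval_bl, symmetric]) simp
      also have "\<dots> \<ge> 0"
      proof (rule integral_nonneg)
        show "((\<lambda>f. apply_bcontfun f x) \<circ> \<phi>) integrable_on {0..real n}"
          by (rule integrable_linear[OF int\<phi> eval_bl]) simp
        fix t assume "t \<in> {0..real n}"
        hence "0 \<le> apply_bcontfun (T t g) x" using feller_props(2)[OF F _ g] unfolding nonneg_fun_def by auto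
        thus "0 \<le> ((\<lambda>f. apply_bcontfun f x) \<circ> \<phi>) t" unfolding \<phi>_def by simp
      qed
      finally show ?thesis .
    qed
    thus "0 \<le> apply_bcontfun Fr x" using LIMSEQ_le_const[OF lim] by blast
  qed
  show ?thesis using G NN by blast
qed


lemma res_props:
  fixes T :: "real \<Rightarrow> ('a::metric_space \<Rightarrow>\<^sub>C real) \<Rightarrow> ('a \<Rightarrow>\<^sub>C real)"
  assumes F: "feller_semigroup T" and lam: "lam > 0"
  shows "generator T (resolvent T lam g) (lam *\<^sub>R resolvent T lam g - g)"
    and "nonneg_fun g \<Longrightarrow> nonneg_fun (resolvent T lam g)"
    and "lam * norm (resolvent T lam g) \<le> norm g"
proof -
  obtain f where f: "generator T f (lam *\<^sub>R f - g)" "nonneg_fun g \<longrightarrow> nonneg_fun f"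
    using exist[OF F lam] by blast
  have R: "resolvent T lam g = f" by (rule res_eq[OF F lam f(1)]) simp
  show "generator T (resolvent T lam g) (lam *\<^sub>R resolvent T lam g - g)" using f R by simp
  show "nonneg_fun g \<Longrightarrow> nonneg_fun (resolvent T lam g)" using f R by simp
  show "lam * norm (resolvent T lam g) \<le> norm g" using dissip[OF F lam f(1)] R by simp
qed

theorem theorem4:
  fixes T :: "real \<Rightarrow> ('a::metric_space \<Rightarrow>\<^sub>C real) \<Rightarrow> ('a \<Rightarrow>\<^sub>C real)"
  assumes "compact (UNIV :: 'a set)"
    and "feller_semigroup T"
    and "\<exists>lam>0. lam *\<^sub>R resolvent T lam one_S \<noteq> one_S"
  shows "\<exists>l. exit_law_LT (resolvent T) l"
proof -
  have F: "feller_semigroup T" by fact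
  define R where "R = resolvent T"
  define l where "l = (\<lambda>lam. one_S - lam *\<^sub>R R lam one_S)"
  have one_x: "apply_bcontfun one_S x = 1" for x by (simp add: one_S_def)
  have one_nn: "nonneg_fun (one_S :: 'a \<Rightarrow>\<^sub>C real)" by (simp add: nonneg_fun_def one_x)
  have one_norm: "norm (one_S :: 'a \<Rightarrow>\<^sub>C real) \<le> 1" by (rule norm_bound) (simp add: one_x)
  have lx: "apply_bcontfun (l lam) x = 1 - lam * apply_bcontfun (R lam one_S) x" for lam x
    by (simp add: l_def one_x)
  have l01: "0 \<le> apply_bcontfun (l lam) x \<and> apply_bcontfun (l lam) x \<le> 1" if lam: "lam > 0" for lam x
  proof -
    have "0 \<le> apply_bcontfun (R lam one_S) x"
      using res_props(2)[OF F lam one_nn] unfolding nonneg_fun_def R_def by blast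
    moreover have "lam * \<bar>apply_bcontfun (R lam one_S) x\<bar> \<le> 1"
    proof -
      have "\<bar>apply_bcontfun (R lam one_S) x\<bar> \<le> norm (R lam one_S)" using norm_bounded[of "R lam one_S" x] by simp
      hence "lam * \<bar>apply_bcontfun (R lam one_S) x\<bar> \<le> lam * norm (R lam one_S)" using lam by (simp add: mult_left_mono)
      also have "\<dots> \<le> norm (one_S :: 'a \<Rightarrow>\<^sub>C real)" using res_props(3)[OF F lam] unfolding R_def by blast
      finally show ?thesis using one_norm by simp
    qed
    ultimately show ?thesis using lam by (simp add: lx)
  qed
  have lnn: "nonneg_fun (l lam)" if "lam > 0" for lam using l01[OF that] by (simp add: nonneg_fun_def)
  have lnorm: "norm (l lam) \<le> 1" if "lam > 0" for lam
    by (rule norm_bound) (use l01[OF that] in auto)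
  have ident: "(lam - mu) *\<^sub>R R lam (l mu) = l mu - l lam" if lam: "lam > 0" and mu: "mu > 0" for lam mu
  proof (cases "lam = mu")
    case True then show ?thesis by simp
  next
    case False
    define fl where "fl = R lam one_S"
    define fm where "fm = R mu one_S"
    define a where "a = lam / (lam - mu)"
    define b where "b = - mu / (lam - mu)"
    define k where "k = a *\<^sub>R fl + b *\<^sub>R fm"
    define h where "h = a *\<^sub>R (lam *\<^sub>R fl - one_S) + b *\<^sub>R (mu *\<^sub>R fm - one_S)"
    have G: "generator T k h" unfolding k_def h_def fl_def fm_def R_def
      by (rule gen_lin[OF F res_props(1)[OF F lam] res_props(1)[OF F mu]])
    have eq: "lam *\<^sub>R k - h = l mu"
    proof (rule bcontfun_eqI)
      fix x
      have d: "lam - mu \<noteq> 0" using False by simp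
      show "apply_bcontfun (lam *\<^sub>R k - h) x = apply_bcontfun (l mu) x"
      proof -
        have ab1: "a + b = 1" using d unfolding a_def b_def by (metis add_divide_distrib diff_conv_add_uminus divide_self_if minus_divide_left)
        have b2: "b * (lam - mu) = - mu" using d by (simp add: b_def field_simps)
        have "apply_bcontfun (lam *\<^sub>R k - h) x = (a + b) + (b * (lam - mu)) * apply_bcontfun fm x"
          by (simp add: k_def h_def one_x algebra_simps)
        also have "\<dots> = apply_bcontfun (l mu) x" unfolding ab1 b2 lx fm_def by simp
        finally show ?thesis .
      qed
    qed
    have Rk: "R lam (l mu) = k" unfolding R_def by (rule res_eq[OF F lam G eq])
    show ?thesis
    proof (rule bcontfun_eqI)
      fix x
      have d: "lam - mu \<noteq> 0" using False by simp
      show "apply_bcontfun ((lam - mu) *\<^sub>R R lam (l mu)) x = apply_bcontfun (l mu - l lam) x"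
      proof -
        have a2: "(lam - mu) * a = lam" using d by (simp add: a_def field_simps)
        have b2: "(lam - mu) * b = - mu" using d by (simp add: b_def field_simps)
        have "apply_bcontfun ((lam - mu) *\<^sub>R R lam (l mu)) x
              = ((lam - mu) * a) * apply_bcontfun fl x + ((lam - mu) * b) * apply_bcontfun fm x"
          unfolding Rk k_def by (simp add: algebra_simps)
        also have "\<dots> = apply_bcontfun (l mu - l lam) x" unfolding a2 b2 using lx[of mu x] lx[of lam x]
          by (simp add: fl_def fm_def)
        finally show ?thesis .
      qed
    qed
  qed
  have mono: "apply_bcontfun (l lam) x \<le> apply_bcontfun (l mu) x" if mu: "0 < mu" and ml: "mu \<le> lam" for lam mu x
  proof -
    have lam: "lam > 0" using mu ml by simp
    have "0 \<le> apply_bcontfun (R lam (l mu)) x"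
      using res_props(2)[OF F lam lnn[OF mu]] unfolding nonneg_fun_def R_def by blast
    hence "0 \<le> (lam - mu) * apply_bcontfun (R lam (l mu)) x" using ml by simp
    also have "(lam - mu) * apply_bcontfun (R lam (l mu)) x = apply_bcontfun (l mu) x - apply_bcontfun (l lam) x"
      using arg_cong[OF ident[OF lam mu], of "\<lambda>f. apply_bcontfun f x"] by simp
    finally show ?thesis by simp
  qed
  have lim: "\<exists>L. ((\<lambda>lam. apply_bcontfun (l lam) x) \<longlongrightarrow> L) (at_right 0) \<and> L \<le> 1" for x
  proof -
    let ?h = "\<lambda>lam. apply_bcontfun (l lam) x"
    define L where "L = Sup (?h ` {0<..})"
    have ne: "?h ` {0<..} \<noteq> {}" by auto
    have bdd: "bdd_above (?h ` {0<..})" using l01 by (auto intro!: bdd_aboveI[of _ 1])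
    have up: "?h y \<le> L" if "y > 0" for y unfolding L_def by (rule cSup_upper[OF _ bdd]) (use that in auto)
    have L1: "L \<le> 1" unfolding L_def by (rule cSup_least[OF ne]) (use l01 in auto)
    have "(?h \<longlongrightarrow> L) (at_right 0)"
    proof (rule order_tendstoI)
      fix a assume "a < L"
      then obtain y where y: "y > 0" "a < ?h y" unfolding L_def using less_cSup_iff[OF ne bdd] by auto
      show "\<forall>\<^sub>F z in at_right 0. a < ?h z"
        unfolding eventually_at_right_field
        by (rule exI[of _ y]) (use y mono in \<open>auto intro: less_le_trans\<close>)
    next
      fix a assume "L < a"
      show "\<forall>\<^sub>F z in at_right 0. ?h z < a"
        unfolding eventually_at_right_field
        by (rule exI[of _ 1]) (use up \<open>L < a\<close> in \<open>auto intro: le_less_trans\<close>)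
    qed
    thus ?thesis using L1 by blast
  qed
  have ex: "\<exists>lam>0. l lam \<noteq> 0"
  proof -
    obtain lam where "lam > 0" "lam *\<^sub>R resolvent T lam one_S \<noteq> one_S" using assms(3) by blast
    thus ?thesis unfolding l_def R_def by auto
  qed
  have "exit_law_LT R l"
    unfolding exit_law_LT_def
  proof (intro conjI allI impI)
    fix a b :: real assume ab: "0 < a" "a \<le> b"
    show "bounded (l ` {a..b})" unfolding bounded_iff
      by (rule exI[of _ 1]) (use ab lnorm in auto)
  next
    fix lam :: real assume "lam > 0" thus "nonneg_fun (l lam)" by (rule lnn)
  next
    show "\<exists>lam>0. l lam \<noteq> 0" by (rule ex)
  next
    fix x show "\<exists>L. ((\<lambda>lam. apply_bcontfun (l lam) x) \<longlongrightarrow> L) (at_right 0) \<and> L \<le> 1" by (rule lim)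
  next
    fix lam mu :: real assume "lam > 0" "mu > 0"
    thus "(lam - mu) *\<^sub>R R lam (l mu) = l mu - l lam" by (rule ident)
  qed
  thus ?thesis unfolding R_def by blast
qed

end
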